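(* In the standing setting, suppose there are deterministic vectors $\boldsymbol l=(l^1,\dots,l^n)$, $\boldsymbol u=(u^1,\dots,u^n)\in\mathbb R^n_{+}$ such that, with probability one, $\boldsymbol l\le \boldsymbol z(t)/\|\boldsymbol z(t)\|\le\boldsymbol u$ (componentwise) for all sufficiently large $t$, and such that $\sum_j l^j\varphi^j_\eta>0$ for all $\eta$. Then $$\sum_{\eta\in\mathcal I}\pi_\eta\log\Big(\sum_{j=1}^n l^j\varphi^j_\eta\Big)\;\le\;\log\lambda_S\;\le\;\sum_{\eta\in\mathcal I}\pi_\eta\log\Big(\sum_{j=1}^n u^j\varphi^j_\eta\Big),$$ where $\varphi^j_\eta=\sum_{i=1}^n A^{ij}_\eta$ is the $j$-th column sum of $\boldsymbol A_\eta$.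
   Context: Standing setting: $\mathcal I$ is a finite or countable set of environmental states; $(\tau_t)$ is a homogeneous Markov chain on $\mathcal I$ with a unique stationary distribution $\boldsymbol\pi$ to which its transition probabilities converge geometrically; $\{\boldsymbol A_\eta\}$ is an ergodic family of nonnegative $n\times n$ matrices (there is $g$ such that all products of $g$ matrices of the family are entrywise positive, all entries are at most some $\beta>0$ and all positive entries at least some $\alpha>0$); the model is $\boldsymbol z(t+1)=\boldsymbol A_{\tau_{t+1}}\boldsymbol z(t)$ with fixed nonzero $\boldsymbol z(0)\ge0$; $\|\cdot\|$ is the $\ell^1$ norm; the SGR $\lambda_S$ is defined by $\log\lambda_S=\lim_t\frac1t\log\|\boldsymbol z(t)\|$ almost surely. *)

theory Defs
  imports "HOL-Probability.Probability"
begin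

definition l1norm :: "real ^ 'n \<Rightarrow> real" where
  "l1norm x = (\<Sum>i\<in>UNIV. \<bar>x $ i\<bar>)"

text \<open>Product A_{e_k} ... A_{e_1} of the matrices indexed by the list [e_1,...,e_k].\<close>
primrec matprod :: "('i \<Rightarrow> real ^ 'n ^ 'n) \<Rightarrow> 'i list \<Rightarrow> real ^ 'n ^ 'n" where
  "matprod A [] = mat 1"
| "matprod A (e # es) = matprod A es ** A e"

definition ergodic_family :: "('i \<Rightarrow> real ^ 'n ^ 'n) \<Rightarrow> bool" where
  "ergodic_family A \<longleftrightarrow>
     (\<forall>e i j. 0 \<le> A e $ i $ j) \<and>
     (\<exists>g::nat. g \<ge> 1 \<and> (\<forall>es. length es = g \<longrightarrow> (\<forall>i j. 0 < matprod A es $ i $ j))) \<and>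
     (\<exists>\<alpha> \<beta>::real. 0 < \<alpha> \<and> 0 < \<beta> \<and>
        (\<forall>e i j. A e $ i $ j \<le> \<beta>) \<and>
        (\<forall>e i j. 0 < A e $ i $ j \<longrightarrow> \<alpha> \<le> A e $ i $ j))"

definition colsum :: "('i \<Rightarrow> real ^ 'n ^ 'n) \<Rightarrow> 'i \<Rightarrow> 'n \<Rightarrow> real" where
  "colsum A e j = (\<Sum>i\<in>UNIV. A e $ i $ j)"

primrec nstep :: "('i \<Rightarrow> 'i \<Rightarrow> real) \<Rightarrow> nat \<Rightarrow> 'i \<Rightarrow> 'i \<Rightarrow> real" where
  "nstep p 0 i j = (if i = j then 1 else 0)"
| "nstep p (Suc n) i j = (\<Sum>\<^sub>\<infinity>k. nstep p n i k * p k j)"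

definition stochastic_kernel :: "('i \<Rightarrow> 'i \<Rightarrow> real) \<Rightarrow> bool" where
  "stochastic_kernel p \<longleftrightarrow> (\<forall>i j. 0 \<le> p i j) \<and> (\<forall>i. (\<lambda>j. p i j) summable_on UNIV \<and> (\<Sum>\<^sub>\<infinity>j. p i j) = 1)"

definition stationary_distribution :: "('i \<Rightarrow> 'i \<Rightarrow> real) \<Rightarrow> ('i \<Rightarrow> real) \<Rightarrow> bool" where
  "stationary_distribution p \<pi> \<longleftrightarrow>
     (\<forall>i. 0 \<le> \<pi> i) \<and> \<pi> summable_on UNIV \<and> (\<Sum>\<^sub>\<infinity>i. \<pi> i) = 1 \<and>
     (\<forall>j. (\<Sum>\<^sub>\<infinity>i. \<pi> i * p i j) = \<pi> j)"

definition markov_chain :: "'a measure \<Rightarrow> (nat \<Rightarrow> 'a \<Rightarrow> 'i) \<Rightarrow> ('i \<Rightarrow> 'i \<Rightarrow> real) \<Rightarrow> bool" where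
  "markov_chain M \<tau> p \<longleftrightarrow>
     prob_space M \<and> stochastic_kernel p \<and>
     (\<forall>t. \<tau> t \<in> measurable M (count_space UNIV)) \<and>
     (\<forall>t (s::nat \<Rightarrow> 'i) j.
        measure M {\<omega>\<in>space M. (\<forall>k\<le>t. \<tau> k \<omega> = s k) \<and> \<tau> (Suc t) \<omega> = j}
        = measure M {\<omega>\<in>space M. \<forall>k\<le>t. \<tau> k \<omega> = s k} * p (s t) j)"

primrec zproc :: "('i \<Rightarrow> real ^ 'n ^ 'n) \<Rightarrow> (nat \<Rightarrow> 'a \<Rightarrow> 'i) \<Rightarrow> real ^ 'n \<Rightarrow> nat \<Rightarrow> 'a \<Rightarrow> real ^ 'n" where
  "zproc A \<tau> z0 0 \<omega> = z0"
| "zproc A \<tau> z0 (Suc t) \<omega> = A (\<tau> (Suc t) \<omega>) *v zproc A \<tau> z0 t \<omega>"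

end

theory Submission
  imports Defs
begin

lemma count_UN_has_sum:
  fixes X :: "'i::countable \<Rightarrow> 'a set"
  assumes P: "prob_space M" and meas: "\<And>i. X i \<in> sets M" and disj: "disjoint_family X"
  shows "((\<lambda>i. measure M (X i)) has_sum measure M (\<Union>i. X i)) UNIV"
proof -
  interpret prob_space M by (rule P)
  have e: "emeasure M (\<Union>(X ` UNIV)) = (\<integral>\<^sup>+i. emeasure M (X i) \<partial>count_space UNIV)"
    by (rule emeasure_UN_countable) (use meas disj in auto)
  have e2: "(\<integral>\<^sup>+i. emeasure M (X i) \<partial>count_space UNIV) = (\<integral>\<^sup>+i. ennreal (measure M (X i)) \<partial>count_space UNIV)"
    by (simp add: emeasure_eq_measure)
  have fin: "(\<integral>\<^sup>+i. ennreal (measure M (X i)) \<partial>count_space UNIV) < \<infinity>"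
    using e e2 emeasure_finite[of "\<Union>i. X i"] by (simp add: less_top)
  have int: "integrable (count_space UNIV) (\<lambda>i. measure M (X i))"
    by (rule integrableI_bounded) (use fin in auto)
  have abs: "Infinite_Set_Sum.abs_summable_on (\<lambda>i. measure M (X i)) UNIV"
    using int by (simp add: abs_summable_on_def)
  have "infsetsum (\<lambda>i. measure M (X i)) UNIV = measure M (\<Union>i. X i)"
    using e e2 nn_integral_conv_infsetsum[OF abs] by (simp add: emeasure_eq_measure infsetsum_nonneg)
  moreover have "infsetsum (\<lambda>i. measure M (X i)) UNIV = infsum (\<lambda>i. measure M (X i)) UNIV"
    by (rule infsetsum_infsum) (use abs abs_summable_equivalent in blast)
  moreover have "(\<lambda>i. measure M (X i)) summable_on UNIV"
    using abs abs_summable_equivalent abs_summable_summable by blast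
  ultimately show ?thesis by (metis has_sum_infsum)
qed

lemma markov_pair:
  fixes \<tau> :: "nat \<Rightarrow> 'a \<Rightarrow> 'i::countable"
  assumes mc: "markov_chain M \<tau> p"
  shows "measure M {\<omega>\<in>space M. \<tau> t \<omega> = k \<and> \<tau> (Suc t) \<omega> = j} = measure M {\<omega>\<in>space M. \<tau> t \<omega> = k} * p k j"
proof -
  have P: "prob_space M" and meas: "\<And>t. \<tau> t \<in> measurable M (count_space UNIV)"
    and mk: "\<And>t s j. measure M {\<omega>\<in>space M. (\<forall>k\<le>t. \<tau> k \<omega> = s k) \<and> \<tau> (Suc t) \<omega> = j}
        = measure M {\<omega>\<in>space M. \<forall>k\<le>t. \<tau> k \<omega> = s k} * p (s t) j"
    using mc unfolding markov_chain_def by auto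
  have ev1: "\<And>i. {\<omega>\<in>space M. \<tau> t \<omega> = i} \<in> sets M" for t
  proof -
    fix i
    have "{\<omega>\<in>space M. \<tau> t \<omega> = i} = \<tau> t -` {i} \<inter> space M" by auto
    then show "{\<omega>\<in>space M. \<tau> t \<omega> = i} \<in> sets M"
      using meas[of t] by (simp add: measurable_count_space_eq2_countable)
  qed
  have ev: "\<And>K c. finite K \<Longrightarrow> {\<omega>\<in>space M. \<forall>k\<in>K. \<tau> k \<omega> = c k} \<in> sets M"
  proof -
    fix K :: "nat set" and c assume "finite K"
    have "\<And>k. {\<omega>\<in>space M. \<tau> k \<omega> = c k} \<in> sets M"
      using ev1 by blast
    then show "{\<omega>\<in>space M. \<forall>k\<in>K. \<tau> k \<omega> = c k} \<in> sets M"
      using \<open>finite K\<close> by (intro sets.sets_Collect_finite_All) auto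
  qed

  have gen: "m \<le> t \<Longrightarrow> measure M {\<omega>\<in>space M. (\<forall>k\<in>{m..t}. \<tau> k \<omega> = s k) \<and> \<tau> (Suc t) \<omega> = j}
      = measure M {\<omega>\<in>space M. \<forall>k\<in>{m..t}. \<tau> k \<omega> = s k} * p (s t) j" for m s
  proof (induction m arbitrary: s)
    case 0
    then show ?case using mk[of t s j] by (simp add: atLeast0AtMost atMost_iff Ball_def)
  next
    case (Suc m)
    define X where "X i = {\<omega>\<in>space M. (\<forall>k\<in>{m..t}. \<tau> k \<omega> = (s(m:=i)) k) \<and> \<tau> (Suc t) \<omega> = j}" for i
    define Y where "Y i = {\<omega>\<in>space M. (\<forall>k\<in>{m..t}. \<tau> k \<omega> = (s(m:=i)) k)}" for i
    have mt: "m \<noteq> t" "m \<le> t" using Suc.prems by auto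
    have XY: "measure M (X i) = measure M (Y i) * p (s t) j" for i
      using Suc.IH[of "s(m:=i)"] mt unfolding X_def Y_def by simp
    have uX: "(\<Union>i. X i) = {\<omega>\<in>space M. (\<forall>k\<in>{Suc m..t}. \<tau> k \<omega> = s k) \<and> \<tau> (Suc t) \<omega> = j}"
      unfolding X_def using mt by (auto simp: Ball_def)
    have uY: "(\<Union>i. Y i) = {\<omega>\<in>space M. (\<forall>k\<in>{Suc m..t}. \<tau> k \<omega> = s k)}"
      unfolding Y_def using mt by (auto simp: Ball_def)
    have sX: "X i \<in> sets M" for i
    proof -
      have "X i = {\<omega>\<in>space M. \<forall>k\<in>{m..t}. \<tau> k \<omega> = (s(m:=i)) k} \<inter> {\<omega>\<in>space M. \<tau> (Suc t) \<omega> = j}"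
        unfolding X_def by auto
      then show ?thesis using ev ev1 by auto
    qed
    have sY: "Y i \<in> sets M" for i unfolding Y_def using ev by auto
    have dX: "disjoint_family X" unfolding disjoint_family_on_def X_def using mt by (auto dest!: bspec[where x=m])
    have dY: "disjoint_family Y" unfolding disjoint_family_on_def Y_def using mt by (auto dest!: bspec[where x=m])
    have hX: "((\<lambda>i. measure M (X i)) has_sum measure M (\<Union>i. X i)) UNIV"
      by (rule count_UN_has_sum[OF P sX dX])
    have hY: "((\<lambda>i. measure M (Y i) * p (s t) j) has_sum measure M (\<Union>i. Y i) * p (s t) j) UNIV"
      by (rule has_sum_cmult_left, rule count_UN_has_sum[OF P sY dY])
    have "measure M (\<Union>i. X i) = measure M (\<Union>i. Y i) * p (s t) j"
      using hX hY XY has_sum_unique by (metis (no_types, lifting) has_sum_cong)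
    then show ?case using uX uY by simp
  qed
  from gen[of t "\<lambda>_. k"] show ?thesis by simp
qed

lemma prod_summ:
  fixes a :: "'i \<Rightarrow> real" and b :: "'i \<Rightarrow> 'k \<Rightarrow> real"
  assumes a0: "\<And>m. 0 \<le> a m" and asum: "a summable_on UNIV"
    and b0: "\<And>m k. 0 \<le> b m k" and bsum: "\<And>m. b m summable_on UNIV"
    and b1: "\<And>m. infsum (b m) UNIV \<le> 1"
  shows "(\<lambda>(m,k). a m * b m k) summable_on (UNIV \<times> UNIV)"
proof (rule nonneg_bdd_above_summable_on)
  show "\<And>x. x \<in> UNIV \<times> UNIV \<Longrightarrow> 0 \<le> (case x of (m, k) \<Rightarrow> a m * b m k)"
    using a0 b0 by auto
  have "sum (\<lambda>(m,k). a m * b m k) F \<le> infsum a UNIV" if F: "finite F" for F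
  proof -
    have "sum (\<lambda>(m,k). a m * b m k) F \<le> sum (\<lambda>(m,k). a m * b m k) (fst ` F \<times> snd ` F)"
    proof (rule sum_mono2)
      show "F \<subseteq> fst ` F \<times> snd ` F" by force
    qed (use F a0 b0 in \<open>auto intro!: mult_nonneg_nonneg\<close>)
    also have "\<dots> = (\<Sum>m\<in>fst ` F. a m * (\<Sum>k\<in>snd ` F. b m k))"
      by (simp add: sum.cartesian_product[symmetric] sum_distrib_left)
    also have "\<dots> \<le> (\<Sum>m\<in>fst ` F. a m)"
    proof (rule sum_mono)
      fix m
      have "(\<Sum>k\<in>snd ` F. b m k) \<le> infsum (b m) UNIV"
        by (rule finite_sum_le_has_sum[where f="b m" and S="infsum (b m) UNIV" and A=UNIV and B="snd ` F"]) (use bsum b0 F in auto)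
      then have "(\<Sum>k\<in>snd ` F. b m k) \<le> 1" using b1[of m] by linarith
      then show "a m * (\<Sum>k\<in>snd ` F. b m k) \<le> a m"
        using a0[of m] by (simp add: mult_left_le)
    qed
    also have "\<dots> \<le> infsum a UNIV"
      by (rule finite_sum_le_has_sum[OF has_sum_infsum[OF asum]]) (use a0 F in auto)
    finally show ?thesis .
  qed
  then show "bdd_above (sum (\<lambda>(m,k). a m * b m k) ` {F. F \<subseteq> UNIV \<times> UNIV \<and> finite F})"
    by (intro bdd_aboveI[where M="infsum a UNIV"]) auto
qed

lemma nstep_props:
  assumes sk: "stochastic_kernel p"
  shows "(\<forall>k. 0 \<le> nstep p t i k) \<and> (nstep p t i has_sum 1) UNIV"
proof (induction t arbitrary: i)
  case 0
  have "(nstep p 0 i has_sum 1) UNIV"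
    by (rule has_sum_finite_neutralI[where B="{i}"]) auto
  moreover have "\<forall>k. 0 \<le> nstep p 0 i k" by simp
  ultimately show ?case by blast
next
  case (Suc t)
  have p0: "\<And>i j. 0 \<le> p i j" and psum: "\<And>i. (p i has_sum 1) UNIV"
    using sk unfolding stochastic_kernel_def by (auto simp: summable_iff_has_sum_infsum) metis
  have n0: "\<And>k. 0 \<le> nstep p t i k" and nsum: "(nstep p t i has_sum 1) UNIV" using Suc.IH by auto
  have ps: "(\<lambda>(m,k). nstep p t i m * p m k) summable_on (UNIV \<times> UNIV)"
  proof (rule prod_summ)
    show "\<And>m. p m summable_on UNIV" using psum has_sum_imp_summable by blast
    show "\<And>m. infsum (p m) UNIV \<le> 1" using psum infsumI by (metis order_refl)
  qed (use n0 nsum p0 in \<open>auto intro: has_sum_imp_summable\<close>)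
  have e: "nstep p (Suc t) i = (\<lambda>k. infsum (\<lambda>m. nstep p t i m * p m k) UNIV)"
    by (rule ext) simp
  have sw: "infsum (\<lambda>k. infsum (\<lambda>m. nstep p t i m * p m k) UNIV) UNIV
      = infsum (\<lambda>m. infsum (\<lambda>k. nstep p t i m * p m k) UNIV) UNIV"
    using infsum_swap_banach[OF ps] by simp
  have "infsum (\<lambda>m. infsum (\<lambda>k. nstep p t i m * p m k) UNIV) UNIV = infsum (\<lambda>m. nstep p t i m) UNIV"
  proof -
    have pv: "\<And>m. infsum (p m) UNIV = 1" using psum infsumI by blast
    show ?thesis by (simp add: infsum_cmult_right' pv)
  qed
  also have "\<dots> = 1" using nsum by (simp add: infsumI)
  finally have v: "infsum (nstep p (Suc t) i) UNIV = 1" using sw e by simp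
  have "nstep p (Suc t) i summable_on UNIV"
  proof -
    have "((\<lambda>(m,k). nstep p t i m * p m k) \<circ> prod.swap) summable_on (UNIV \<times> UNIV)"
      using summable_on_reindex[of prod.swap "UNIV \<times> UNIV" "\<lambda>(m,k). nstep p t i m * p m k"] ps
      by simp
    then have "(\<lambda>(k,m). nstep p t i m * p m k) summable_on (UNIV \<times> UNIV)"
      by (simp add: o_def case_prod_unfold)
    from summable_on_Sigma_banach[OF this] show ?thesis by (simp add: e)
  qed
  moreover have "\<forall>k. 0 \<le> nstep p (Suc t) i k"
    using n0 p0 by (auto intro!: infsum_nonneg)
  ultimately show ?case using v has_sum_infsum by metis
qed

lemma ev_meas:
  fixes \<tau> :: "nat \<Rightarrow> 'a \<Rightarrow> 'i::countable"
  assumes mc: "markov_chain M \<tau> p"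
  shows "{\<omega>\<in>space M. \<tau> t \<omega> = i} \<in> sets M"
proof -
  have meas: "\<tau> t \<in> measurable M (count_space UNIV)" using mc unfolding markov_chain_def by auto
  have "{\<omega>\<in>space M. \<tau> t \<omega> = i} = \<tau> t -` {i} \<inter> space M" by auto
  then show ?thesis using meas by (simp add: measurable_count_space_eq2_countable)
qed

lemma dist_sum:
  fixes \<tau> :: "nat \<Rightarrow> 'a \<Rightarrow> 'i::countable"
  assumes mc: "markov_chain M \<tau> p"
  shows "((\<lambda>j. measure M {\<omega>\<in>space M. \<tau> t \<omega> = j}) has_sum 1) UNIV"
proof -
  have P: "prob_space M" using mc unfolding markov_chain_def by auto
  have "((\<lambda>j. measure M {\<omega>\<in>space M. \<tau> t \<omega> = j}) has_sum measure M (\<Union>j. {\<omega>\<in>space M. \<tau> t \<omega> = j})) UNIV"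
    by (rule count_UN_has_sum[OF P]) (use ev_meas[OF mc] in \<open>auto simp: disjoint_family_on_def\<close>)
  moreover have "(\<Union>j. {\<omega>\<in>space M. \<tau> t \<omega> = j}) = space M" by auto
  ultimately show ?thesis using prob_space.prob_space[OF P] by simp
qed

lemma dist_step:
  fixes \<tau> :: "nat \<Rightarrow> 'a \<Rightarrow> 'i::countable"
  assumes mc: "markov_chain M \<tau> p"
  shows "((\<lambda>k. measure M {\<omega>\<in>space M. \<tau> t \<omega> = k} * p k j) has_sum measure M {\<omega>\<in>space M. \<tau> (Suc t) \<omega> = j}) UNIV"
proof -
  have P: "prob_space M" using mc unfolding markov_chain_def by auto
  have s: "{\<omega>\<in>space M. \<tau> t \<omega> = k \<and> \<tau> (Suc t) \<omega> = j} \<in> sets M" for k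
  proof -
    have "{\<omega>\<in>space M. \<tau> t \<omega> = k \<and> \<tau> (Suc t) \<omega> = j} = {\<omega>\<in>space M. \<tau> t \<omega> = k} \<inter> {\<omega>\<in>space M. \<tau> (Suc t) \<omega> = j}" by auto
    then show ?thesis using ev_meas[OF mc] by auto
  qed
  have "((\<lambda>k. measure M {\<omega>\<in>space M. \<tau> t \<omega> = k \<and> \<tau> (Suc t) \<omega> = j}) has_sum measure M (\<Union>k. {\<omega>\<in>space M. \<tau> t \<omega> = k \<and> \<tau> (Suc t) \<omega> = j})) UNIV"
    by (rule count_UN_has_sum[OF P s]) (auto simp: disjoint_family_on_def)
  moreover have "(\<Union>k. {\<omega>\<in>space M. \<tau> t \<omega> = k \<and> \<tau> (Suc t) \<omega> = j}) = {\<omega>\<in>space M. \<tau> (Suc t) \<omega> = j}" by auto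
  ultimately show ?thesis using markov_pair[OF mc] by simp
qed

lemma le_has_sum_single:
  fixes f :: "'i \<Rightarrow> real"
  assumes "(f has_sum s) UNIV" "\<And>x. 0 \<le> f x"
  shows "f x \<le> s"
  using finite_sum_le_has_sum[OF assms(1), of "{x}"] assms(2) by auto

lemma dist_nstep:
  fixes \<tau> :: "nat \<Rightarrow> 'a \<Rightarrow> 'i::countable"
  assumes mc: "markov_chain M \<tau> p"
  shows "((\<lambda>i. measure M {\<omega>\<in>space M. \<tau> 0 \<omega> = i} * nstep p t i j) has_sum measure M {\<omega>\<in>space M. \<tau> t \<omega> = j}) UNIV"
proof (induction t arbitrary: j)
  case 0
  show ?case
    by (rule has_sum_finite_neutralI[where B="{j}"]) auto
next
  case (Suc t)
  define q where "q t j = measure M {\<omega>\<in>space M. \<tau> t \<omega> = j}" for t j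
  have sk: "stochastic_kernel p" using mc unfolding markov_chain_def by auto
  have p0: "\<And>i j. 0 \<le> p i j" and psum: "\<And>i. (p i has_sum 1) UNIV"
    using sk unfolding stochastic_kernel_def by (auto simp: summable_iff_has_sum_infsum) metis
  have p1: "p k j \<le> 1" for k j using le_has_sum_single[OF psum p0] .
  have n0: "\<And>t i k. 0 \<le> nstep p t i k" and nsum: "\<And>t i. (nstep p t i has_sum 1) UNIV"
    using nstep_props[OF sk] by auto
  have n1: "nstep p t i k \<le> 1" for t i k using le_has_sum_single[OF nsum n0] .
  have q0: "0 \<le> q t j" for t j unfolding q_def by simp
  have qs: "(q t has_sum 1) UNIV" for t unfolding q_def using dist_sum[OF mc] by simp
  have IH: "((\<lambda>i. q 0 i * nstep p t i k) has_sum q t k) UNIV" for k using Suc.IH unfolding q_def .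
  have h1: "((\<lambda>k. q t k * p k j) has_sum q (Suc t) j) UNIV" unfolding q_def by (rule dist_step[OF mc])
  have bs: "(\<lambda>k. nstep p t i k * p k j) summable_on UNIV" for i
    by (rule summable_on_comparison_test[OF has_sum_imp_summable[OF nsum[of t i]]])
       (use n0 p0 p1 in \<open>auto intro: mult_left_le\<close>)
  have ps: "(\<lambda>(i,k). q 0 i * (nstep p t i k * p k j)) summable_on (UNIV \<times> UNIV)"
  proof (rule prod_summ)
    show "q 0 summable_on UNIV" using qs has_sum_imp_summable by blast
    show "infsum (\<lambda>k. nstep p t i k * p k j) UNIV \<le> 1" for i
    proof -
      have "infsum (\<lambda>k. nstep p t i k * p k j) UNIV \<le> infsum (nstep p t i) UNIV"
        by (rule infsum_mono[OF bs has_sum_imp_summable[OF nsum]]) (use n0 p1 in \<open>auto intro: mult_left_le\<close>)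
      then show ?thesis using infsumI[OF nsum[of t i]] by simp
    qed
  qed (use q0 n0 p0 bs in auto)
  have sw: "infsum (\<lambda>i. infsum (\<lambda>k. q 0 i * (nstep p t i k * p k j)) UNIV) UNIV
      = infsum (\<lambda>k. infsum (\<lambda>i. q 0 i * (nstep p t i k * p k j)) UNIV) UNIV"
    using infsum_swap_banach[OF ps] by simp
  have "infsum (\<lambda>k. infsum (\<lambda>i. q 0 i * (nstep p t i k * p k j)) UNIV) UNIV
      = infsum (\<lambda>k. q t k * p k j) UNIV"
  proof (rule infsum_cong)
    fix k
    have "infsum (\<lambda>i. q 0 i * (nstep p t i k * p k j)) UNIV = infsum (\<lambda>i. q 0 i * nstep p t i k) UNIV * p k j"
      by (simp add: infsum_cmult_left'[symmetric] mult.assoc)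
    also have "\<dots> = q t k * p k j" using infsumI[OF IH[of k]] by simp
    finally show "infsum (\<lambda>i. q 0 i * (nstep p t i k * p k j)) UNIV = q t k * p k j" .
  qed
  also have "\<dots> = q (Suc t) j" using infsumI[OF h1] by simp
  finally have v: "infsum (\<lambda>i. q 0 i * nstep p (Suc t) i j) UNIV = q (Suc t) j"
    using sw by (simp add: infsum_cmult_right')
  have "(\<lambda>i. q 0 i * nstep p (Suc t) i j) summable_on UNIV"
    by (rule summable_on_comparison_test[OF has_sum_imp_summable[OF qs[of 0]]])
       (use q0 n0[of "Suc t"] n1[of "Suc t"] in \<open>auto intro: mult_left_le simp del: nstep.simps\<close>)
  then have "((\<lambda>i. q 0 i * nstep p (Suc t) i j) has_sum q (Suc t) j) UNIV"
    using has_sum_infsum v by fastforce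
  then show ?case unfolding q_def .
qed

lemma dist_conv:
  fixes \<tau> :: "nat \<Rightarrow> 'a \<Rightarrow> 'i::countable"
  assumes mc: "markov_chain M \<tau> p" and stat: "stationary_distribution p \<pi>"
    and geom: "\<exists>C \<rho>::real. 0 \<le> \<rho> \<and> \<rho> < 1 \<and> (\<forall>m i j. \<bar>nstep p m i j - \<pi> j\<bar> \<le> C * \<rho> ^ m)"
  shows "(\<lambda>t. measure M {\<omega>\<in>space M. \<tau> t \<omega> = j}) \<longlonglongrightarrow> \<pi> j"
proof -
  obtain C \<rho> :: real where r: "0 \<le> \<rho>" "\<rho> < 1" and b: "\<And>m i j. \<bar>nstep p m i j - \<pi> j\<bar> \<le> C * \<rho> ^ m"
    using geom by blast
  define q where "q t j = measure M {\<omega>\<in>space M. \<tau> t \<omega> = j}" for t j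
  have q0: "0 \<le> q t j" for t j unfolding q_def by simp
  have qs: "(q t has_sum 1) UNIV" for t unfolding q_def using dist_sum[OF mc] by simp
  have bound: "\<bar>q t j - \<pi> j\<bar> \<le> C * \<rho> ^ t" for t
  proof -
    have h: "((\<lambda>i. q 0 i * nstep p t i j) has_sum q t j) UNIV" unfolding q_def by (rule dist_nstep[OF mc])
    have h2: "((\<lambda>i. q 0 i * \<pi> j) has_sum \<pi> j) UNIV" using has_sum_cmult_left[OF qs[of 0], of "\<pi> j"] by simp
    have h3: "((\<lambda>i. q 0 i * (C * \<rho> ^ t)) has_sum C * \<rho> ^ t) UNIV" using has_sum_cmult_left[OF qs[of 0], of "C * \<rho> ^ t"] by simp
    have "q t j \<le> \<pi> j + C * \<rho> ^ t"
    proof -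
      have hh: "((\<lambda>i. q 0 i * (\<pi> j + C * \<rho> ^ t)) has_sum (\<pi> j + C * \<rho> ^ t)) UNIV"
        using has_sum_cmult_left[OF qs[of 0], of "\<pi> j + C * \<rho> ^ t"] by simp
      moreover have "q 0 i * nstep p t i j \<le> q 0 i * (\<pi> j + C * \<rho> ^ t)" for i
      proof -
        have "nstep p t i j \<le> \<pi> j + C * \<rho> ^ t" using b[of t i j] by linarith
        then show ?thesis using q0[of 0 i] by (simp add: mult_left_mono)
      qed
      ultimately show ?thesis using has_sum_mono[OF h hh] by simp
    qed
    moreover have "\<pi> j - C * \<rho> ^ t \<le> q t j"
    proof -
      have hh: "((\<lambda>i. q 0 i * (\<pi> j - C * \<rho> ^ t)) has_sum (\<pi> j - C * \<rho> ^ t)) UNIV"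
        using has_sum_cmult_left[OF qs[of 0], of "\<pi> j - C * \<rho> ^ t"] by simp
      moreover have "q 0 i * (\<pi> j - C * \<rho> ^ t) \<le> q 0 i * nstep p t i j" for i
      proof -
        have "\<pi> j - C * \<rho> ^ t \<le> nstep p t i j" using b[of t i j] by linarith
        then show ?thesis using q0[of 0 i] by (simp add: mult_left_mono)
      qed
      ultimately show ?thesis using has_sum_mono[OF hh h] by simp
    qed
    ultimately show ?thesis by linarith
  qed
  have c0: "(\<lambda>t. C * \<rho> ^ t) \<longlonglongrightarrow> 0"
  proof -
    have "(\<lambda>n. \<rho> ^ n) \<longlonglongrightarrow> 0" by (rule LIMSEQ_power_zero) (use r in simp)
    then show ?thesis by (rule tendsto_mult_right_zero)
  qed
  have "(\<lambda>t. q t j - \<pi> j) \<longlonglongrightarrow> 0"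
  proof (rule Lim_null_comparison[OF _ c0])
    show "\<forall>\<^sub>F x in sequentially. norm (q x j - \<pi> j) \<le> C * \<rho> ^ x"
      by (intro always_eventually allI) (simp add: bound)
  qed
  then show ?thesis unfolding q_def by (simp add: LIM_zero_iff)
qed
lemma bnd_split:
  fixes q f :: "'i \<Rightarrow> real"
  assumes qs: "(q has_sum 1) UNIV" and q0: "\<And>j. 0 \<le> q j" and fb: "\<And>j. \<bar>f j\<bar> \<le> K"
    and F: "finite F"
  shows "\<bar>infsum (\<lambda>j. q j * f j) UNIV - sum (\<lambda>j. q j * f j) F\<bar> \<le> K * (1 - sum q F)"
proof -
  have qsum: "q summable_on UNIV" using qs has_sum_imp_summable by blast
  have nb: "norm (q j * f j) \<le> K * q j" for j
    using mult_left_mono[OF fb[of j] q0[of j]] q0[of j] by (simp add: abs_mult mult.commute)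
  have Ks: "(\<lambda>j. K * q j) summable_on UNIV" using qsum by (rule summable_on_cmult_right)
  have K0: "0 \<le> K" using fb[of undefined] by linarith
  have as: "(\<lambda>j. norm (q j * f j)) summable_on UNIV"
    by (rule summable_on_comparison_test[OF Ks]) (use nb in auto)
  then have s: "(\<lambda>j. q j * f j) summable_on UNIV" using Infinite_Sum.abs_summable_summable[of "\<lambda>j. q j * f j" UNIV] by simp
  have sF: "(\<lambda>j. q j * f j) summable_on (-F)" by (rule summable_on_subset_banach[OF s]) auto
  have asF: "(\<lambda>j. norm (q j * f j)) summable_on (-F)" by (rule summable_on_subset_banach[OF as]) auto
  have qF: "q summable_on (-F)" by (rule summable_on_subset_banach[OF qsum]) auto
  have "infsum (\<lambda>j. q j * f j) (F \<union> -F) = infsum (\<lambda>j. q j * f j) F + infsum (\<lambda>j. q j * f j) (-F)"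
    by (rule infsum_Un_disjoint) (use F sF in auto)
  then have e1: "infsum (\<lambda>j. q j * f j) UNIV = sum (\<lambda>j. q j * f j) F + infsum (\<lambda>j. q j * f j) (-F)"
    using F by simp
  have "infsum q (F \<union> -F) = infsum q F + infsum q (-F)"
    by (rule infsum_Un_disjoint) (use F qF in auto)
  then have e2: "1 = sum q F + infsum q (-F)" using F infsumI[OF qs] by simp
  have "\<bar>infsum (\<lambda>j. q j * f j) (-F)\<bar> \<le> infsum (\<lambda>j. norm (q j * f j)) (-F)"
    using norm_infsum_bound[of "\<lambda>j. q j * f j" "-F"] asF by simp
  also have "\<dots> \<le> infsum (\<lambda>j. K * q j) (-F)"
    by (rule infsum_mono[OF asF]) (use qF nb in \<open>auto intro: summable_on_cmult_right\<close>)
  also have "\<dots> = K * infsum q (-F)" by (simp add: infsum_cmult_right')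
  finally have "\<bar>infsum (\<lambda>j. q j * f j) (-F)\<bar> \<le> K * infsum q (-F)" .
  moreover have "infsum q (-F) = 1 - sum q F" using e2 by simp
  ultimately show ?thesis using e1 by simp
qed

lemma infsum_conv_bounded:
  fixes q :: "nat \<Rightarrow> 'i \<Rightarrow> real" and \<pi> f :: "'i \<Rightarrow> real"
  assumes q0: "\<And>t j. 0 \<le> q t j" and qs: "\<And>t. (q t has_sum 1) UNIV"
    and p0: "\<And>j. 0 \<le> \<pi> j" and ps: "(\<pi> has_sum 1) UNIV"
    and conv: "\<And>j. (\<lambda>t. q t j) \<longlonglongrightarrow> \<pi> j" and fb: "\<And>j. \<bar>f j\<bar> \<le> K"
  shows "(\<lambda>t. infsum (\<lambda>j. q t j * f j) UNIV) \<longlonglongrightarrow> infsum (\<lambda>j. \<pi> j * f j) UNIV"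
proof (rule LIMSEQ_I)
  fix r :: real assume r: "0 < r"
  have K0: "0 \<le> K" using fb[of undefined] by linarith
  define e where "e = r / (4 * K + 1)"
  have e0: "0 < e" unfolding e_def using r K0 by simp
  have eK: "4 * K * e < r"
  proof -
    have "4 * K * e < (4 * K + 1) * e" using e0 by simp
    also have "\<dots> = r" unfolding e_def using K0 by simp
    finally show ?thesis .
  qed
  obtain F where F: "finite F" and Fd: "dist (sum \<pi> F) 1 \<le> e"
    using has_sum_finite_approximation[OF ps e0] by blast
  have Fs: "sum \<pi> F \<le> 1" by (rule finite_sum_le_has_sum[OF ps F]) (use p0 in auto)
  then have Fe: "1 - sum \<pi> F \<le> e" using Fd by (simp add: dist_real_def)
  have "(\<lambda>t. \<Sum>j\<in>F. \<bar>q t j - \<pi> j\<bar>) \<longlonglongrightarrow> (\<Sum>j\<in>F. \<bar>\<pi> j - \<pi> j\<bar>)"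
    by (intro tendsto_intros conv)
  then have "(\<lambda>t. \<Sum>j\<in>F. \<bar>q t j - \<pi> j\<bar>) \<longlonglongrightarrow> 0" by simp
  then obtain N where N: "\<And>t. t \<ge> N \<Longrightarrow> norm ((\<Sum>j\<in>F. \<bar>q t j - \<pi> j\<bar>) - 0) < e"
    using LIMSEQ_D[OF _ e0] by blast
  show "\<exists>N. \<forall>n\<ge>N. norm (infsum (\<lambda>j. q n j * f j) UNIV - infsum (\<lambda>j. \<pi> j * f j) UNIV) < r"
  proof (intro exI allI impI)
    fix t assume t: "N \<le> t"
    define S where "S = (\<Sum>j\<in>F. \<bar>q t j - \<pi> j\<bar>)"
    have S: "S < e" using N[OF t] unfolding S_def by simp
    have S0: "0 \<le> S" unfolding S_def by (simp add: sum_nonneg)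
    have b1: "\<bar>infsum (\<lambda>j. q t j * f j) UNIV - sum (\<lambda>j. q t j * f j) F\<bar> \<le> K * (1 - sum (q t) F)"
      by (rule bnd_split[OF qs q0 fb F])
    have b2: "\<bar>infsum (\<lambda>j. \<pi> j * f j) UNIV - sum (\<lambda>j. \<pi> j * f j) F\<bar> \<le> K * (1 - sum \<pi> F)"
      by (rule bnd_split[OF ps p0 fb F])
    have b3: "\<bar>sum (\<lambda>j. q t j * f j) F - sum (\<lambda>j. \<pi> j * f j) F\<bar> \<le> K * S"
    proof -
      have "\<bar>sum (\<lambda>j. q t j * f j) F - sum (\<lambda>j. \<pi> j * f j) F\<bar> = \<bar>\<Sum>j\<in>F. (q t j - \<pi> j) * f j\<bar>"
        by (simp add: sum_subtractf left_diff_distrib)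
      also have "\<dots> \<le> (\<Sum>j\<in>F. \<bar>(q t j - \<pi> j) * f j\<bar>)" by (rule sum_abs)
      also have "\<dots> \<le> (\<Sum>j\<in>F. K * \<bar>q t j - \<pi> j\<bar>)"
      proof (rule sum_mono)
        fix j
        have "\<bar>q t j - \<pi> j\<bar> * \<bar>f j\<bar> \<le> \<bar>q t j - \<pi> j\<bar> * K" by (rule mult_left_mono) (use fb in auto)
        then show "\<bar>(q t j - \<pi> j) * f j\<bar> \<le> K * \<bar>q t j - \<pi> j\<bar>" by (simp add: abs_mult mult.commute)
      qed
      also have "\<dots> = K * S" unfolding S_def by (simp add: sum_distrib_left)
      finally show ?thesis .
    qed
    have b4: "1 - sum (q t) F \<le> (1 - sum \<pi> F) + S"
    proof -
      have "sum \<pi> F - sum (q t) F = (\<Sum>j\<in>F. \<pi> j - q t j)" by (simp add: sum_subtractf)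
      also have "\<dots> \<le> S" unfolding S_def by (rule sum_mono) auto
      finally show ?thesis by simp
    qed
    have "\<bar>infsum (\<lambda>j. q t j * f j) UNIV - infsum (\<lambda>j. \<pi> j * f j) UNIV\<bar>
        \<le> K * (1 - sum (q t) F) + K * (1 - sum \<pi> F) + K * S"
      using b1 b2 b3 by linarith
    also have "\<dots> \<le> K * ((1 - sum \<pi> F) + S) + K * (1 - sum \<pi> F) + K * S"
      using b4 K0 by (simp add: mult_left_mono)
    also have "\<dots> \<le> K * (e + e) + K * e + K * e"
      using Fe S K0 by (intro add_mono mult_left_mono) auto
    also have "\<dots> = 4 * K * e" by simp
    finally show "norm (infsum (\<lambda>j. q t j * f j) UNIV - infsum (\<lambda>j. \<pi> j * f j) UNIV) < r"
      using eK by simp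
  qed
qed
lemma expect_nonneg:
  fixes X :: "'a \<Rightarrow> 'i::countable" and G :: "'i \<Rightarrow> real"
  assumes P: "prob_space M" and Xm: "X \<in> measurable M (count_space UNIV)"
    and G0: "\<And>j. 0 \<le> G j" and Gb: "\<And>j. G j \<le> K"
  shows "integral\<^sup>L M (\<lambda>\<omega>. G (X \<omega>)) = infsum (\<lambda>j. measure M {\<omega>\<in>space M. X \<omega> = j} * G j) UNIV"
proof -
  interpret prob_space M by (rule P)
  define E where "E j = {\<omega>\<in>space M. X \<omega> = j}" for j
  have Es: "E j \<in> sets M" for j
  proof -
    have "E j = X -` {j} \<inter> space M" unfolding E_def by auto
    then show ?thesis using Xm by (simp add: measurable_count_space_eq2_countable)
  qed
  have qs: "((\<lambda>j. measure M (E j)) has_sum 1) UNIV"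
  proof -
    have "((\<lambda>j. measure M (E j)) has_sum measure M (\<Union>j. E j)) UNIV"
      by (rule count_UN_has_sum[OF P Es]) (auto simp: disjoint_family_on_def E_def)
    moreover have "(\<Union>j. E j) = space M" unfolding E_def by auto
    ultimately show ?thesis by (simp add: prob_space)
  qed
  have GXm: "(\<lambda>\<omega>. G (X \<omega>)) \<in> borel_measurable M"
    using Xm by (rule measurable_compose) simp
  have step1: "(\<integral>\<^sup>+\<omega>. ennreal (G (X \<omega>)) \<partial>M)
      = (\<integral>\<^sup>+\<omega>. (\<integral>\<^sup>+j. ennreal (G j) * indicator (E j) \<omega> \<partial>count_space UNIV) \<partial>M)"
  proof (rule nn_integral_cong)
    fix \<omega> assume w: "\<omega> \<in> space M"
    have "(\<integral>\<^sup>+j. ennreal (G j) * indicator (E j) \<omega> \<partial>count_space UNIV)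
        = (\<Sum>j\<in>{X \<omega>}. ennreal (G j) * indicator (E j) \<omega>)"
      by (rule nn_integral_count_space') (auto simp: E_def)
    also have "\<dots> = ennreal (G (X \<omega>))" using w by (simp add: E_def)
    finally show "ennreal (G (X \<omega>)) = (\<integral>\<^sup>+j. ennreal (G j) * indicator (E j) \<omega> \<partial>count_space UNIV)" by simp
  qed
  also have "\<dots> = (\<integral>\<^sup>+j. (\<integral>\<^sup>+\<omega>. ennreal (G j) * indicator (E j) \<omega> \<partial>M) \<partial>count_space UNIV)"
    by (rule nn_integral_count_space_nn_integral) (use Es in auto)
  also have "\<dots> = (\<integral>\<^sup>+j. ennreal (measure M (E j) * G j) \<partial>count_space UNIV)"
    by (rule nn_integral_cong) (simp add: nn_integral_cmult_indicator[OF Es] emeasure_eq_measure ennreal_mult'' mult.commute)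
  finally have e1: "(\<integral>\<^sup>+\<omega>. ennreal (G (X \<omega>)) \<partial>M) = (\<integral>\<^sup>+j. ennreal (measure M (E j) * G j) \<partial>count_space UNIV)" .
  have qsum: "(\<lambda>j. measure M (E j)) summable_on UNIV" using qs has_sum_imp_summable by blast
  have sm: "(\<lambda>j. measure M (E j) * G j) summable_on UNIV"
    by (rule summable_on_comparison_test[OF summable_on_cmult_left[OF qsum, of K]])
       (use G0 Gb in \<open>auto intro: mult_left_mono\<close>)
  have abs: "Infinite_Set_Sum.abs_summable_on (\<lambda>j. measure M (E j) * G j) UNIV"
  proof -
    have "(\<lambda>j. norm (measure M (E j) * G j)) = (\<lambda>j. measure M (E j) * G j)"
      using G0 by (auto simp: abs_mult)
    then have "(\<lambda>j. norm (measure M (E j) * G j)) summable_on UNIV" using sm by simp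
    then show ?thesis using abs_summable_equivalent by blast
  qed
  have "(\<integral>\<^sup>+j. ennreal (measure M (E j) * G j) \<partial>count_space UNIV) = ennreal (infsetsum (\<lambda>j. measure M (E j) * G j) UNIV)"
    by (rule nn_integral_conv_infsetsum[OF abs]) (use G0 in auto)
  moreover have "infsetsum (\<lambda>j. measure M (E j) * G j) UNIV = infsum (\<lambda>j. measure M (E j) * G j) UNIV"
    by (rule infsetsum_infsum) (use abs abs_summable_equivalent in blast)
  moreover have "integral\<^sup>L M (\<lambda>\<omega>. G (X \<omega>)) = enn2real (\<integral>\<^sup>+\<omega>. ennreal (G (X \<omega>)) \<partial>M)"
    by (rule integral_eq_nn_integral[OF GXm]) (use G0 in auto)
  ultimately show ?thesis using e1 G0 unfolding E_def
    by (simp add: infsum_nonneg)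
qed

lemma expect_bounded:
  fixes X :: "'a \<Rightarrow> 'i::countable" and f :: "'i \<Rightarrow> real"
  assumes P: "prob_space M" and Xm: "X \<in> measurable M (count_space UNIV)"
    and fb: "\<And>j. \<bar>f j\<bar> \<le> K"
  shows "integral\<^sup>L M (\<lambda>\<omega>. f (X \<omega>)) = infsum (\<lambda>j. measure M {\<omega>\<in>space M. X \<omega> = j} * f j) UNIV"
proof -
  interpret prob_space M by (rule P)
  define q where "q j = measure M {\<omega>\<in>space M. X \<omega> = j}" for j
  have Es: "{\<omega>\<in>space M. X \<omega> = j} \<in> sets M" for j
  proof -
    have "{\<omega>\<in>space M. X \<omega> = j} = X -` {j} \<inter> space M" by auto
    then show ?thesis using Xm by (simp add: measurable_count_space_eq2_countable)
  qed
  have qs: "(q has_sum 1) UNIV"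
  proof -
    have "(q has_sum measure M (\<Union>j. {\<omega>\<in>space M. X \<omega> = j})) UNIV"
      unfolding q_def by (rule count_UN_has_sum[OF P Es]) (auto simp: disjoint_family_on_def)
    moreover have "(\<Union>j. {\<omega>\<in>space M. X \<omega> = j}) = space M" by auto
    ultimately show ?thesis by (simp add: prob_space)
  qed
  have K0: "0 \<le> K" using fb[of undefined] by linarith
  define G where "G j = f j + K" for j
  have G0: "0 \<le> G j" for j using fb[of j] unfolding G_def by linarith
  have Gb: "G j \<le> 2 * K" for j using fb[of j] unfolding G_def by linarith
  have eG: "integral\<^sup>L M (\<lambda>\<omega>. G (X \<omega>)) = infsum (\<lambda>j. q j * G j) UNIV"
    unfolding q_def by (rule expect_nonneg[OF P Xm G0 Gb])
  have fXm: "(\<lambda>\<omega>. f (X \<omega>)) \<in> borel_measurable M"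
    using Xm by (rule measurable_compose) simp
  have fint: "integrable M (\<lambda>\<omega>. f (X \<omega>))"
    by (rule integrable_const_bound[where B=K]) (use fb fXm in auto)
  have "integral\<^sup>L M (\<lambda>\<omega>. G (X \<omega>)) = integral\<^sup>L M (\<lambda>\<omega>. f (X \<omega>)) + K"
    unfolding G_def using fint by (simp add: prob_space)
  moreover have "infsum (\<lambda>j. q j * G j) UNIV = infsum (\<lambda>j. q j * f j) UNIV + K"
  proof -
    have qsum: "q summable_on UNIV" using qs has_sum_imp_summable by blast
    have sm: "(\<lambda>j. q j * f j) summable_on UNIV"
    proof -
      have "(\<lambda>j. norm (q j * f j)) summable_on UNIV"
        by (rule summable_on_comparison_test[OF summable_on_cmult_left[OF qsum, of K]])
           (use fb in \<open>auto simp: abs_mult q_def intro: mult_left_mono\<close>)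
      then show ?thesis using Infinite_Sum.abs_summable_summable[of "\<lambda>j. q j * f j" UNIV] by simp
    qed
    have "infsum (\<lambda>j. q j * G j) UNIV = infsum (\<lambda>j. q j * f j + q j * K) UNIV"
      unfolding G_def by (simp add: distrib_left)
    also have "\<dots> = infsum (\<lambda>j. q j * f j) UNIV + infsum (\<lambda>j. q j * K) UNIV"
      by (rule infsum_add[OF sm summable_on_cmult_left[OF qsum]])
    also have "infsum (\<lambda>j. q j * K) UNIV = K" using infsumI[OF qs] by (simp add: infsum_cmult_left')
    finally show ?thesis .
  qed
  ultimately show ?thesis using eG unfolding q_def by simp
qed

lemma mc_expect_conv:
  fixes \<tau> :: "nat \<Rightarrow> 'a \<Rightarrow> 'i::countable" and f :: "'i \<Rightarrow> real"
  assumes mc: "markov_chain M \<tau> p" and stat: "stationary_distribution p \<pi>"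
    and geom: "\<exists>C \<rho>::real. 0 \<le> \<rho> \<and> \<rho> < 1 \<and> (\<forall>m i j. \<bar>nstep p m i j - \<pi> j\<bar> \<le> C * \<rho> ^ m)"
    and fb: "\<And>j. \<bar>f j\<bar> \<le> K"
  shows "(\<lambda>t. integral\<^sup>L M (\<lambda>\<omega>. f (\<tau> t \<omega>))) \<longlonglongrightarrow> infsum (\<lambda>j. \<pi> j * f j) UNIV"
proof -
  have P: "prob_space M" and Xm: "\<And>t. \<tau> t \<in> measurable M (count_space UNIV)"
    using mc unfolding markov_chain_def by auto
  have p0: "\<And>j. 0 \<le> \<pi> j" and ps: "(\<pi> has_sum 1) UNIV"
    using stat unfolding stationary_distribution_def by (auto simp: summable_iff_has_sum_infsum)
  have "(\<lambda>t. infsum (\<lambda>j. measure M {\<omega>\<in>space M. \<tau> t \<omega> = j} * f j) UNIV) \<longlonglongrightarrow> infsum (\<lambda>j. \<pi> j * f j) UNIV"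
    by (rule infsum_conv_bounded[OF _ dist_sum[OF mc] p0 ps dist_conv[OF mc stat geom] fb]) simp
  moreover have "integral\<^sup>L M (\<lambda>\<omega>. f (\<tau> t \<omega>)) = infsum (\<lambda>j. measure M {\<omega>\<in>space M. \<tau> t \<omega> = j} * f j) UNIV" for t
    by (rule expect_bounded[OF P Xm fb])
  ultimately show ?thesis by simp
qed
lemma cesaro:
  fixes a :: "nat \<Rightarrow> real"
  assumes a: "a \<longlonglongrightarrow> L"
  shows "(\<lambda>t. (\<Sum>s<t. a s) / real t) \<longlonglongrightarrow> L"
proof (rule LIMSEQ_I)
  fix r :: real assume r: "0 < r"
  obtain N where N: "\<And>s. s \<ge> N \<Longrightarrow> norm (a s - L) < r / 2"
    using LIMSEQ_D[OF a, of "r/2"] r by auto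
  define B where "B = (\<Sum>s<N. \<bar>a s - L\<bar>)"
  have B0: "0 \<le> B" unfolding B_def by (simp add: sum_nonneg)
  obtain N2 :: nat where N2: "real N2 > 2 * B / r" using reals_Archimedean2 by blast
  show "\<exists>no. \<forall>t\<ge>no. norm ((\<Sum>s<t. a s) / real t - L) < r"
  proof (intro exI allI impI)
    fix t assume t: "max (Suc N) N2 \<le> t"
    then have tN: "N \<le> t" and t0: "0 < t" and tN2: "N2 \<le> t" by auto
    have e: "(\<Sum>s<t. a s) / real t - L = (\<Sum>s<t. a s - L) / real t"
      using t0 by (simp add: sum_subtractf field_simps)
    have split: "(\<Sum>s<t. a s - L) = (\<Sum>s<N. a s - L) + (\<Sum>s\<in>{N..<t}. a s - L)"
      using tN by (metis atLeast0LessThan sum.atLeastLessThan_concat zero_le)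
    have "\<bar>\<Sum>s\<in>{N..<t}. a s - L\<bar> \<le> (\<Sum>s\<in>{N..<t}. \<bar>a s - L\<bar>)" by (rule sum_abs)
    also have "\<dots> \<le> (\<Sum>s\<in>{N..<t}. r / 2)"
      by (rule sum_mono) (use N in \<open>auto simp: less_imp_le\<close>)
    also have "\<dots> = real (t - N) * (r / 2)" by simp
    also have "\<dots> \<le> real t * (r / 2)" using r by (intro mult_right_mono) auto
    finally have b2: "\<bar>\<Sum>s\<in>{N..<t}. a s - L\<bar> \<le> real t * (r / 2)" .
    have b1: "\<bar>\<Sum>s<N. a s - L\<bar> \<le> B" unfolding B_def by (rule sum_abs)
    have "\<bar>\<Sum>s<t. a s - L\<bar> \<le> B + real t * (r / 2)" using split b1 b2 by linarith
    moreover have "B < real t * (r / 2)"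
    proof -
      have "2 * B / r < real t" using N2 tN2 by linarith
      then have "2 * B < real t * r" using r by (simp add: divide_less_eq)
      then show ?thesis by simp
    qed
    ultimately have "\<bar>\<Sum>s<t. a s - L\<bar> < real t * r" by linarith
    then show "norm ((\<Sum>s<t. a s) / real t - L) < r"
      using t0 e by (simp add: abs_divide divide_less_eq mult.commute)
  qed
qed
lemma bound_from_ae:
  fixes Y :: "nat \<Rightarrow> 'a \<Rightarrow> real"
  assumes P: "prob_space M" and Ym: "\<And>t. Y t \<in> borel_measurable M"
    and Yb: "\<And>t \<omega>. \<bar>Y t \<omega>\<bar> \<le> K"
    and ae: "\<And>\<epsilon>. \<epsilon> > 0 \<Longrightarrow> AE \<omega> in M. eventually (\<lambda>t. Y t \<omega> \<le> L + \<epsilon>) sequentially"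
    and lim: "(\<lambda>t. integral\<^sup>L M (Y t)) \<longlonglongrightarrow> m"
  shows "m \<le> L"
proof (rule field_le_epsilon)
  interpret prob_space M by (rule P)
  fix \<epsilon> :: real assume e: "0 < \<epsilon>"
  define V where "V t \<omega> = max (Y t \<omega>) (L + \<epsilon>) - (L + \<epsilon>)" for t \<omega>
  have Vm: "V t \<in> borel_measurable M" for t unfolding V_def using Ym by measurable
  have Vb: "norm (V t \<omega>) \<le> K + \<bar>L + \<epsilon>\<bar>" for t \<omega>
    using Yb[of t \<omega>] unfolding V_def by (auto simp: max_def)
  have Vlim: "AE \<omega> in M. (\<lambda>t. V t \<omega>) \<longlonglongrightarrow> 0"
    using ae[OF e]
  proof eventually_elim
    case (elim \<omega>)
    then have "eventually (\<lambda>t. V t \<omega> = 0) sequentially"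
      by eventually_elim (auto simp: V_def max_def)
    then show ?case by (rule tendsto_eventually)
  qed
  have wi: "integrable M (\<lambda>\<omega>. K + \<bar>L + \<epsilon>\<bar>)" by simp
  have cV: "(\<lambda>t. integral\<^sup>L M (V t)) \<longlonglongrightarrow> integral\<^sup>L M (\<lambda>\<omega>. 0::real)"
    by (rule integral_dominated_convergence[OF _ Vm wi Vlim]) (use Vb in auto)
  have Vi: "integrable M (V t)" for t
    by (rule integrable_const_bound[where B="K + \<bar>L + \<epsilon>\<bar>"]) (use Vb Vm in auto)
  have Yi: "integrable M (Y t)" for t
    by (rule integrable_const_bound[where B=K]) (use Yb Ym in auto)
  have le: "integral\<^sup>L M (Y t) \<le> (L + \<epsilon>) + integral\<^sup>L M (V t)" for t
  proof -
    have "integral\<^sup>L M (Y t) \<le> integral\<^sup>L M (\<lambda>\<omega>. (L + \<epsilon>) + V t \<omega>)"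
      by (rule integral_mono) (use Yi Vi in \<open>auto simp: V_def\<close>)
    also have "\<dots> = (L + \<epsilon>) + integral\<^sup>L M (V t)" using Vi by (simp add: prob_space)
    finally show ?thesis .
  qed
  have "(\<lambda>t. (L + \<epsilon>) + integral\<^sup>L M (V t)) \<longlonglongrightarrow> (L + \<epsilon>) + 0"
    using cV by (intro tendsto_add tendsto_const) simp
  then have "m \<le> (L + \<epsilon>) + 0"
    by (rule LIMSEQ_le[OF lim]) (use le in auto)
  then show "m \<le> L + \<epsilon>" by simp
qed
lemma log_bound:
  fixes A :: "'i \<Rightarrow> real ^ 'n ^ 'n" and w :: "real ^ 'n"
  assumes erg: "ergodic_family A" and w0: "\<And>j. 0 \<le> w $ j"
    and pos: "\<And>\<eta>. 0 < (\<Sum>j\<in>UNIV. w $ j * colsum A \<eta> j)"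
  shows "\<exists>K. \<forall>\<eta>. \<bar>ln (\<Sum>j\<in>UNIV. w $ j * colsum A \<eta> j)\<bar> \<le> K"
proof -
  obtain \<alpha> \<beta> :: real where a0: "0 < \<alpha>" and b0: "0 < \<beta>" and Ab: "\<And>e i j. A e $ i $ j \<le> \<beta>"
    and Aa: "\<And>e i j. 0 < A e $ i $ j \<Longrightarrow> \<alpha> \<le> A e $ i $ j" and A0: "\<And>e i j. 0 \<le> A e $ i $ j"
    using erg unfolding ergodic_family_def by blast
  have c0: "0 \<le> colsum A e j" for e j unfolding colsum_def by (simp add: sum_nonneg A0)
  define U where "U = (\<Sum>j\<in>UNIV. w $ j * (real CARD('n) * \<beta>))"
  have up: "(\<Sum>j\<in>UNIV. w $ j * colsum A \<eta> j) \<le> U" for \<eta>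
    unfolding U_def
  proof (rule sum_mono)
    fix j
    have "colsum A \<eta> j \<le> (\<Sum>i\<in>(UNIV::'n set). \<beta>)" unfolding colsum_def by (rule sum_mono) (use Ab in auto)
    then have "colsum A \<eta> j \<le> real CARD('n) * \<beta>" by simp
    then show "w $ j * colsum A \<eta> j \<le> w $ j * (real CARD('n) * \<beta>)" using w0[of j] by (simp add: mult_left_mono)
  qed
  define J where "J = {j. 0 < w $ j}"
  have Jne: "J \<noteq> {}"
  proof
    assume "J = {}"
    then have "w $ j = 0" for j using w0[of j] unfolding J_def by (metis (mono_tags) empty_Collect_eq order_less_le)
    then show False using pos[of undefined] by simp
  qed
  define c where "c = Min ((\<lambda>j. w $ j) ` J) * \<alpha>"
  have cpos: "0 < c" unfolding c_def using Jne a0 by (simp add: J_def)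
  have lo: "c \<le> (\<Sum>j\<in>UNIV. w $ j * colsum A \<eta> j)" for \<eta>
  proof -
    obtain j where j: "0 < w $ j * colsum A \<eta> j"
    proof (rule ccontr)
      assume "\<not> thesis"
      then have "\<not> (0 < w $ j * colsum A \<eta> j)" for j using that by blast
      then have "\<And>j. w $ j * colsum A \<eta> j \<le> 0" by (simp add: not_less)
      then have "(\<Sum>j\<in>UNIV. w $ j * colsum A \<eta> j) \<le> 0" by (simp add: sum_nonpos)
      then show False using pos[of \<eta>] by simp
    qed
    have wj: "0 < w $ j" and cj: "0 < colsum A \<eta> j"
      using j w0[of j] c0[of \<eta> j] by (auto simp: zero_less_mult_iff)
    obtain i where i: "0 < A \<eta> $ i $ j"
    proof (rule ccontr)
      assume "\<not> thesis"
      then have "\<not> (0 < A \<eta> $ i $ j)" for i using that by blast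
      then have "\<And>i. A \<eta> $ i $ j \<le> 0" by (simp add: not_less)
      then have "colsum A \<eta> j \<le> 0" unfolding colsum_def by (simp add: sum_nonpos)
      then show False using cj by simp
    qed
    have "\<alpha> \<le> A \<eta> $ i $ j" using Aa[OF i] .
    also have "\<dots> \<le> colsum A \<eta> j" unfolding colsum_def
      by (rule member_le_sum) (use A0 in auto)
    finally have ac: "\<alpha> \<le> colsum A \<eta> j" .
    have "Min ((\<lambda>j. w $ j) ` J) \<le> w $ j" using wj unfolding J_def by (intro Min_le) auto
    then have "c \<le> w $ j * \<alpha>" unfolding c_def using a0 by (simp add: mult_right_mono)
    also have "\<dots> \<le> w $ j * colsum A \<eta> j" using ac wj by (simp add: mult_left_mono)
    also have "\<dots> \<le> (\<Sum>j\<in>UNIV. w $ j * colsum A \<eta> j)"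
      by (rule member_le_sum) (use w0 c0 in auto)
    finally show ?thesis .
  qed
  show ?thesis
  proof (intro exI allI)
    fix \<eta>
    have l1: "ln c \<le> ln (\<Sum>j\<in>UNIV. w $ j * colsum A \<eta> j)" using lo[of \<eta>] cpos by (subst ln_le_cancel_iff) auto
    have l2: "ln (\<Sum>j\<in>UNIV. w $ j * colsum A \<eta> j) \<le> ln U" using up[of \<eta>] pos[of \<eta>] by (subst ln_le_cancel_iff) auto
    show "\<bar>ln (\<Sum>j\<in>UNIV. w $ j * colsum A \<eta> j)\<bar> \<le> \<bar>ln c\<bar> + \<bar>ln U\<bar>" using l1 l2 by linarith
  qed
qed

lemma zproc_nonneg:
  assumes A0: "\<And>e i j. 0 \<le> A e $ i $ j" and z0: "\<And>i. 0 \<le> z0 $ i"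
  shows "0 \<le> zproc A \<tau> z0 t \<omega> $ i"
proof (induction t arbitrary: i)
  case 0 then show ?case using z0 by simp
next
  case (Suc t) then show ?case
    by (simp add: matrix_vector_mult_def sum_nonneg A0)
qed

lemma l1norm_mult:
  fixes B :: "real ^ 'n ^ 'n" and x :: "real ^ 'n"
  assumes B0: "\<And>i j. 0 \<le> B $ i $ j" and x0: "\<And>j. 0 \<le> x $ j"
  shows "l1norm (B *v x) = (\<Sum>j\<in>UNIV. (\<Sum>i\<in>UNIV. B $ i $ j) * x $ j)"
proof -
  have "l1norm (B *v x) = (\<Sum>i\<in>UNIV. \<Sum>j\<in>UNIV. B $ i $ j * x $ j)"
    unfolding l1norm_def matrix_vector_mult_def using B0 x0
    by (intro sum.cong refl) (simp add: sum_nonneg)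
  also have "\<dots> = (\<Sum>j\<in>UNIV. (\<Sum>i\<in>UNIV. B $ i $ j) * x $ j)"
    by (subst sum.swap) (simp add: sum_distrib_right)
  finally show ?thesis .
qed

lemma growth_step:
  fixes B :: "real ^ 'n ^ 'n" and x l u :: "real ^ 'n"
  assumes B0: "\<And>i j. 0 \<le> B $ i $ j" and x0: "\<And>j. 0 \<le> x $ j"
    and bl: "\<And>j. l $ j \<le> x $ j / l1norm x" and bu: "\<And>j. x $ j / l1norm x \<le> u $ j"
    and l0: "\<And>j. 0 \<le> l $ j"
    and pos: "0 < (\<Sum>j\<in>UNIV. l $ j * (\<Sum>i\<in>UNIV. B $ i $ j))"
  shows "0 < l1norm x"
    and "l1norm x * (\<Sum>j\<in>UNIV. l $ j * (\<Sum>i\<in>UNIV. B $ i $ j)) \<le> l1norm (B *v x)"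
    and "l1norm (B *v x) \<le> l1norm x * (\<Sum>j\<in>UNIV. u $ j * (\<Sum>i\<in>UNIV. B $ i $ j))"
proof -
  define N where "N = l1norm x"
  have N0: "0 \<le> N" unfolding N_def l1norm_def by (simp add: sum_nonneg)
  show Np: "0 < l1norm x"
  proof (rule ccontr)
    assume "\<not> 0 < l1norm x"
    then have "N = 0" using N0 unfolding N_def by simp
    then have "l $ j = 0" for j using bl[of j] l0[of j] unfolding N_def by simp
    then show False using pos by simp
  qed
  have cs0: "0 \<le> (\<Sum>i\<in>UNIV. B $ i $ j)" for j by (simp add: sum_nonneg B0)
  have xe: "x $ j = N * (x $ j / N)" for j using Np unfolding N_def by simp
  have e: "l1norm (B *v x) = N * (\<Sum>j\<in>UNIV. (\<Sum>i\<in>UNIV. B $ i $ j) * (x $ j / N))"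
    using l1norm_mult[OF B0 x0] Np unfolding N_def by (simp add: sum_distrib_left sum_divide_distrib[symmetric] field_simps)
  have s1: "(\<Sum>j\<in>UNIV. l $ j * (\<Sum>i\<in>UNIV. B $ i $ j)) \<le> (\<Sum>j\<in>UNIV. (\<Sum>i\<in>UNIV. B $ i $ j) * (x $ j / N))"
  proof (rule sum_mono)
    fix j show "l $ j * (\<Sum>i\<in>UNIV. B $ i $ j) \<le> (\<Sum>i\<in>UNIV. B $ i $ j) * (x $ j / N)"
      using mult_right_mono[OF bl[of j] cs0[of j]] unfolding N_def by (simp add: mult.commute)
  qed
  have s2: "(\<Sum>j\<in>UNIV. (\<Sum>i\<in>UNIV. B $ i $ j) * (x $ j / N)) \<le> (\<Sum>j\<in>UNIV. u $ j * (\<Sum>i\<in>UNIV. B $ i $ j))"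
  proof (rule sum_mono)
    fix j show "(\<Sum>i\<in>UNIV. B $ i $ j) * (x $ j / N) \<le> u $ j * (\<Sum>i\<in>UNIV. B $ i $ j)"
      using mult_right_mono[OF bu[of j] cs0[of j]] unfolding N_def by (simp add: mult.commute)
  qed
  show "l1norm x * (\<Sum>j\<in>UNIV. l $ j * (\<Sum>i\<in>UNIV. B $ i $ j)) \<le> l1norm (B *v x)"
    using e s1 N0 unfolding N_def by (simp add: mult_left_mono)
  show "l1norm (B *v x) \<le> l1norm x * (\<Sum>j\<in>UNIV. u $ j * (\<Sum>i\<in>UNIV. B $ i $ j))"
    using e s2 N0 unfolding N_def by (simp add: mult_left_mono)
qed
lemma path_bound:
  fixes W g :: "nat \<Rightarrow> real"
  assumes step: "\<And>t. t \<ge> T \<Longrightarrow> W t + g t \<le> W (Suc t)"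
    and lim: "(\<lambda>t. W t / real t) \<longlonglongrightarrow> L" and e: "0 < \<epsilon>"
  shows "eventually (\<lambda>t. (\<Sum>s<t. g s) / real t \<le> L + \<epsilon>) sequentially"
proof -
  have acc: "t \<ge> T \<Longrightarrow> W T + (\<Sum>s\<in>{T..<t}. g s) \<le> W t" for t
  proof (induction t rule: dec_induct)
    case base then show ?case by simp
  next
    case (step t)
    then show ?case using assms(1)[of t] by simp
  qed
  define c where "c = (\<Sum>s<T. g s) - W T"
  have lim2: "(\<lambda>t. W t / real t + c / real t) \<longlonglongrightarrow> L + 0"
    by (intro tendsto_add lim tendsto_divide_0[OF tendsto_const] filterlim_at_top_imp_at_infinity filterlim_real_sequentially)
  then have ev: "eventually (\<lambda>t. W t / real t + c / real t < L + \<epsilon>) sequentially"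
    using e by (intro order_tendstoD(2)) auto
  moreover have "eventually (\<lambda>t. t \<ge> max T 1) sequentially" by (rule eventually_ge_at_top)
  ultimately show ?thesis
  proof eventually_elim
    case (elim t)
    then have tT: "T \<le> t" and t0: "0 < t" by auto
    have "(\<Sum>s<t. g s) = (\<Sum>s<T. g s) + (\<Sum>s\<in>{T..<t}. g s)"
      using tT by (metis atLeast0LessThan sum.atLeastLessThan_concat zero_le)
    also have "\<dots> \<le> W t + c" using acc[OF tT] unfolding c_def by linarith
    finally have "(\<Sum>s<t. g s) / real t \<le> (W t + c) / real t"
      using t0 by (simp add: divide_right_mono)
    also have "\<dots> = W t / real t + c / real t" by (simp add: add_divide_distrib)
    finally show ?case using elim by linarith
  qed
qed
theorem mainTheorem5:
  fixes M :: "'a measure"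
    and \<tau> :: "nat \<Rightarrow> 'a \<Rightarrow> 'i::countable"
    and p :: "'i \<Rightarrow> 'i \<Rightarrow> real"
    and \<pi> :: "'i \<Rightarrow> real"
    and A :: "'i \<Rightarrow> real ^ 'n ^ 'n"
    and z0 l u :: "real ^ 'n"
    and log_lambda_S :: real
  assumes mc: "markov_chain M \<tau> p"
    and stat: "stationary_distribution p \<pi>"
    and uniq: "\<And>\<pi>'. stationary_distribution p \<pi>' \<Longrightarrow> \<pi>' = \<pi>"
    and geom: "\<exists>C \<rho>::real. 0 \<le> \<rho> \<and> \<rho> < 1 \<and> (\<forall>m i j. \<bar>nstep p m i j - \<pi> j\<bar> \<le> C * \<rho> ^ m)"
    and erg: "ergodic_family A"
    and z0: "\<forall>i. 0 \<le> z0 $ i" "z0 \<noteq> 0"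
    and SGR: "AE \<omega> in M. (\<lambda>t. ln (l1norm (zproc A \<tau> z0 t \<omega>)) / real t) \<longlonglongrightarrow> log_lambda_S"
    and lu_nonneg: "\<forall>j. 0 \<le> l $ j" "\<forall>j. 0 \<le> u $ j"
    and bounds: "AE \<omega> in M. eventually (\<lambda>t. \<forall>j.
                    l $ j \<le> zproc A \<tau> z0 t \<omega> $ j / l1norm (zproc A \<tau> z0 t \<omega>) \<and>
                    zproc A \<tau> z0 t \<omega> $ j / l1norm (zproc A \<tau> z0 t \<omega>) \<le> u $ j) sequentially"
    and lpos: "\<forall>\<eta>. 0 < (\<Sum>j\<in>UNIV. l $ j * colsum A \<eta> j)"
  shows "(\<Sum>\<^sub>\<infinity>\<eta>. \<pi> \<eta> * ln (\<Sum>j\<in>UNIV. l $ j * colsum A \<eta> j)) \<le> log_lambda_S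
         \<and> log_lambda_S \<le> (\<Sum>\<^sub>\<infinity>\<eta>. \<pi> \<eta> * ln (\<Sum>j\<in>UNIV. u $ j * colsum A \<eta> j))"
proof -
  have P: "prob_space M" and Xm: "\<And>t. \<tau> t \<in> measurable M (count_space UNIV)"
    using mc unfolding markov_chain_def by auto
  interpret prob_space M by (rule P)
  have A0: "\<And>e i j. 0 \<le> A e $ i $ j" using erg unfolding ergodic_family_def by blast
  have cs0: "0 \<le> colsum A e j" for e j unfolding colsum_def by (simp add: sum_nonneg A0)
  define gl where "gl \<eta> = ln (\<Sum>j\<in>UNIV. l $ j * colsum A \<eta> j)" for \<eta>
  define gu where "gu \<eta> = ln (\<Sum>j\<in>UNIV. u $ j * colsum A \<eta> j)" for \<eta>
  obtain Kl where Kl: "\<And>\<eta>. \<bar>gl \<eta>\<bar> \<le> Kl"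
    using log_bound[OF erg _ lpos[rule_format]] lu_nonneg(1) unfolding gl_def by blast
  have "\<exists>\<omega>\<in>space M. eventually (\<lambda>t. \<forall>j.
                    l $ j \<le> zproc A \<tau> z0 t \<omega> $ j / l1norm (zproc A \<tau> z0 t \<omega>) \<and>
                    zproc A \<tau> z0 t \<omega> $ j / l1norm (zproc A \<tau> z0 t \<omega>) \<le> u $ j) sequentially"
  proof (rule ccontr)
    assume nt: "\<not> ?thesis"
    have "AE \<omega> in M. False"
      using bounds AE_space
    proof eventually_elim
      case (elim \<omega>) then show ?case using nt by blast
    qed
    then show False by (simp add: AE_False)
  qed
  then obtain \<omega>0 T0 where "\<forall>t\<ge>T0. \<forall>j.
                    l $ j \<le> zproc A \<tau> z0 t \<omega>0 $ j / l1norm (zproc A \<tau> z0 t \<omega>0) \<and>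
                    zproc A \<tau> z0 t \<omega>0 $ j / l1norm (zproc A \<tau> z0 t \<omega>0) \<le> u $ j"
    unfolding eventually_sequentially by blast
  then have lu: "l $ j \<le> u $ j" for j
    using order_trans by (metis order_refl)
  have upos: "0 < (\<Sum>j\<in>UNIV. u $ j * colsum A \<eta> j)" for \<eta>
  proof -
    have "(\<Sum>j\<in>UNIV. l $ j * colsum A \<eta> j) \<le> (\<Sum>j\<in>UNIV. u $ j * colsum A \<eta> j)"
      by (rule sum_mono) (use lu cs0 in \<open>auto intro: mult_right_mono\<close>)
    then show ?thesis using lpos by (metis order_less_le_trans)
  qed
  obtain Ku where Ku: "\<And>\<eta>. \<bar>gu \<eta>\<bar> \<le> Ku"
    using log_bound[OF erg _ upos] lu_nonneg(2) unfolding gu_def by blast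
  have avg_meas: "(\<lambda>\<omega>. (\<Sum>s<t. f (\<tau> (Suc s) \<omega>)) / real t) \<in> borel_measurable M" for f :: "'i \<Rightarrow> real" and t
  proof -
    have "(\<lambda>\<omega>. f (\<tau> (Suc s) \<omega>)) \<in> borel_measurable M" for s
      using Xm[of "Suc s"] by (rule measurable_compose) simp
    then show ?thesis by (intro borel_measurable_divide borel_measurable_sum) auto
  qed
  have avg_bound: "\<bar>(\<Sum>s<t. f (\<tau> (Suc s) \<omega>)) / real t\<bar> \<le> K"
    if fb: "\<And>\<eta>. \<bar>f \<eta>\<bar> \<le> K" for f :: "'i \<Rightarrow> real" and K t \<omega>
  proof (cases "t = 0")
    case True then show ?thesis using fb[of undefined] by simp
  next
    case False
    have "\<bar>\<Sum>s<t. f (\<tau> (Suc s) \<omega>)\<bar> \<le> (\<Sum>s<t. \<bar>f (\<tau> (Suc s) \<omega>)\<bar>)" by (rule sum_abs)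
    also have "\<dots> \<le> (\<Sum>s<t. K)" by (rule sum_mono) (use fb in auto)
    also have "\<dots> = real t * K" by simp
    finally show ?thesis using False by (simp add: abs_divide divide_le_eq mult.commute)
  qed
  have avg_int: "(\<lambda>t. integral\<^sup>L M (\<lambda>\<omega>. (\<Sum>s<t. f (\<tau> (Suc s) \<omega>)) / real t)) \<longlonglongrightarrow> infsum (\<lambda>\<eta>. \<pi> \<eta> * f \<eta>) UNIV"
    if fb: "\<And>\<eta>. \<bar>f \<eta>\<bar> \<le> K" for f :: "'i \<Rightarrow> real" and K
  proof -
    have fi: "integrable M (\<lambda>\<omega>. f (\<tau> (Suc s) \<omega>))" for s
    proof (rule integrable_const_bound[where B=K])
      show "(\<lambda>\<omega>. f (\<tau> (Suc s) \<omega>)) \<in> borel_measurable M"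
        using Xm[of "Suc s"] by (rule measurable_compose) simp
    qed (use fb in auto)
    have e: "integral\<^sup>L M (\<lambda>\<omega>. (\<Sum>s<t. f (\<tau> (Suc s) \<omega>)) / real t)
        = (\<Sum>s<t. integral\<^sup>L M (\<lambda>\<omega>. f (\<tau> (Suc s) \<omega>))) / real t" for t
      using fi by (simp add: integral_sum)
    have "(\<lambda>s. integral\<^sup>L M (\<lambda>\<omega>. f (\<tau> (Suc s) \<omega>))) \<longlonglongrightarrow> infsum (\<lambda>\<eta>. \<pi> \<eta> * f \<eta>) UNIV"
      using LIMSEQ_Suc[OF mc_expect_conv[OF mc stat geom fb]] .
    from cesaro[OF this] show ?thesis unfolding e .
  qed
  have path: "AE \<omega> in M. (\<forall>\<epsilon>>0. eventually (\<lambda>t. (\<Sum>s<t. gl (\<tau> (Suc s) \<omega>)) / real t \<le> log_lambda_S + \<epsilon>) sequentially)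
       \<and> (\<forall>\<epsilon>>0. eventually (\<lambda>t. (\<Sum>s<t. - gu (\<tau> (Suc s) \<omega>)) / real t \<le> - log_lambda_S + \<epsilon>) sequentially)"
    using SGR bounds
  proof eventually_elim
    case (elim \<omega>)
    define z where "z t = zproc A \<tau> z0 t \<omega>" for t
    define W where "W t = ln (l1norm (z t))" for t
    have lim: "(\<lambda>t. W t / real t) \<longlonglongrightarrow> log_lambda_S" using elim(1) unfolding W_def z_def .
    obtain T where T: "\<And>t j. t \<ge> T \<Longrightarrow> l $ j \<le> z t $ j / l1norm (z t) \<and> z t $ j / l1norm (z t) \<le> u $ j"
      using elim(2) unfolding eventually_sequentially z_def by blast
    have z0': "0 \<le> z t $ j" for t j unfolding z_def by (rule zproc_nonneg[OF A0 z0(1)[rule_format]])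
    have st: "W t + gl (\<tau> (Suc t) \<omega>) \<le> W (Suc t) \<and> W (Suc t) \<le> W t + gu (\<tau> (Suc t) \<omega>)" if t: "t \<ge> T" for t
    proof -
      let ?B = "A (\<tau> (Suc t) \<omega>)"
      have zs: "z (Suc t) = ?B *v z t" unfolding z_def by simp
      have lp: "0 < (\<Sum>j\<in>UNIV. l $ j * (\<Sum>i\<in>UNIV. ?B $ i $ j))" using lpos unfolding colsum_def by blast
      have up': "0 < (\<Sum>j\<in>UNIV. u $ j * (\<Sum>i\<in>UNIV. ?B $ i $ j))" using upos unfolding colsum_def by blast
      note gs = growth_step[of ?B "z t" l u, OF A0 z0' conjunct1[OF T[OF t]] conjunct2[OF T[OF t]] lu_nonneg(1)[rule_format] lp]
      have Np: "0 < l1norm (z t)" by (rule gs(1))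
      have Np1: "0 < l1norm (z (Suc t))"
        using gs(2) mult_pos_pos[OF Np lp] unfolding zs by linarith
      have "ln (l1norm (z t) * (\<Sum>j\<in>UNIV. l $ j * (\<Sum>i\<in>UNIV. ?B $ i $ j))) \<le> ln (l1norm (z (Suc t)))"
        using gs(2) Np lp zs Np1 by (subst ln_le_cancel_iff) (auto intro: mult_pos_pos)
      then have a: "W t + gl (\<tau> (Suc t) \<omega>) \<le> W (Suc t)"
        using Np lp unfolding W_def gl_def colsum_def by (simp add: ln_mult)
      have "ln (l1norm (z (Suc t))) \<le> ln (l1norm (z t) * (\<Sum>j\<in>UNIV. u $ j * (\<Sum>i\<in>UNIV. ?B $ i $ j)))"
        using gs(3) Np up' zs Np1 by (subst ln_le_cancel_iff) (auto intro: mult_pos_pos)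
      then have b: "W (Suc t) \<le> W t + gu (\<tau> (Suc t) \<omega>)"
        using Np up' unfolding W_def gu_def colsum_def by (simp add: ln_mult)
      show ?thesis using a b by simp
    qed
    have c1: "\<forall>\<epsilon>>0. eventually (\<lambda>t. (\<Sum>s<t. gl (\<tau> (Suc s) \<omega>)) / real t \<le> log_lambda_S + \<epsilon>) sequentially"
    proof (intro allI impI)
      fix \<epsilon> :: real assume e: "0 < \<epsilon>"
      show "eventually (\<lambda>t. (\<Sum>s<t. gl (\<tau> (Suc s) \<omega>)) / real t \<le> log_lambda_S + \<epsilon>) sequentially"
        by (rule path_bound[of T W "\<lambda>s. gl (\<tau> (Suc s) \<omega>)", OF _ lim e]) (use st in auto)
    qed
    have c2: "\<forall>\<epsilon>>0. eventually (\<lambda>t. (\<Sum>s<t. - gu (\<tau> (Suc s) \<omega>)) / real t \<le> - log_lambda_S + \<epsilon>) sequentially"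
    proof (intro allI impI)
      fix \<epsilon> :: real assume e: "0 < \<epsilon>"
      have lim': "(\<lambda>t. - W t / real t) \<longlonglongrightarrow> - log_lambda_S" using tendsto_minus[OF lim] by simp
      show "eventually (\<lambda>t. (\<Sum>s<t. - gu (\<tau> (Suc s) \<omega>)) / real t \<le> - log_lambda_S + \<epsilon>) sequentially"
        by (rule path_bound[of T "\<lambda>t. - W t" "\<lambda>s. - gu (\<tau> (Suc s) \<omega>)", OF _ lim' e]) (use st in force)
    qed
    show ?case using c1 c2 by blast
  qed
  have lower: "infsum (\<lambda>\<eta>. \<pi> \<eta> * gl \<eta>) UNIV \<le> log_lambda_S"
  proof (rule bound_from_ae[OF P avg_meas avg_bound[OF Kl] _ avg_int[OF Kl]])
    fix \<epsilon> :: real assume e: "0 < \<epsilon>"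
    show "AE \<omega> in M. eventually (\<lambda>t. (\<Sum>s<t. gl (\<tau> (Suc s) \<omega>)) / real t \<le> log_lambda_S + \<epsilon>) sequentially"
      by (rule eventually_mono[OF path]) (use e in blast)
  qed
  have Ku': "\<bar>- gu \<eta>\<bar> \<le> Ku" for \<eta> using Ku[of \<eta>] by simp
  have "infsum (\<lambda>\<eta>. \<pi> \<eta> * - gu \<eta>) UNIV \<le> - log_lambda_S"
  proof (rule bound_from_ae[OF P avg_meas avg_bound[OF Ku'] _ avg_int[OF Ku']])
    fix \<epsilon> :: real assume e: "0 < \<epsilon>"
    show "AE \<omega> in M. eventually (\<lambda>t. (\<Sum>s<t. - gu (\<tau> (Suc s) \<omega>)) / real t \<le> - log_lambda_S + \<epsilon>) sequentially"
      by (rule eventually_mono[OF path]) (use e in blast)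
  qed
  then have upper: "log_lambda_S \<le> infsum (\<lambda>\<eta>. \<pi> \<eta> * gu \<eta>) UNIV"
    by (simp add: infsum_uminus)
  show ?thesis using lower upper unfolding gl_def gu_def by simp
qed

end
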